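(* Let $x:[t_0,t_c]\to\mathbb{R}^n$ and $u:[t_0,t_c]\to\mathbb{R}^d$ be continuous, $k_m>0$, and let $m:[t_0,t_c]\to\mathbb{R}^{n\times n(n+d)}$ solve $\dot m=Y(x(t),u(t))-k_m m$, $m(t_0)=0$. Let $t_0\le t_{w_1}<\dots<t_{w_p}=t_c$ with $p\ge n+d$, $m_j=m(t_{w_j})$ and $M=[m_1^T,\dots,m_p^T]^T\in\mathbb{R}^{np\times n(n+d)}$. If $\operatorname{rank}(M)=n(n+d)$, then the signal $w(t)=[x(t)^T,u(t)^T]^T$ is exciting over $[t_0,t_c]$, i.e. there is $\alpha>0$ with $\int_{t_0}^{t_c}w(\tau)w(\tau)^T\,d\tau\ge\alpha I_{n+d}$.
   Context: $Y(x,u)=[I_n\otimes x^T,\ I_n\otimes u^T]\in\mathbb{R}^{n\times n(n+d)}$. A bounded vector signal $w(t)$ is called exciting over an interval $[t,t+T]$, $T>0$, if there is $\alpha>0$ with $\int_t^{t+T}w(\tau)w(\tau)^T\,d\tau\ge\alpha I$ (matrix inequality in the positive semidefinite order). *)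

theory Defs
  imports "HOL-Analysis.Analysis"
begin

definition stackw :: "real^'n \<Rightarrow> real^'d \<Rightarrow> real^('n + 'd)" where
  "stackw x u = (\<chi> k. case k of Inl i \<Rightarrow> x $ i | Inr j \<Rightarrow> u $ j)"

text \<open>Regressor Y(x,u) = [I_n (x) x^T, I_n (x) u^T], an n x n(n+d) matrix.
  Columns are indexed by pairs (j,k) with j in 'n and k in 'n + 'd; entry (i,(j,k)) is
  delta_ij * w_k (a column permutation of the block form, irrelevant for rank).\<close>
definition Yreg :: "real^'n \<Rightarrow> real^'d \<Rightarrow> real^('n \<times> ('n + 'd))^'n" where
  "Yreg x u = (\<chi> i. \<chi> c. if i = fst c then stackw x u $ snd c else 0)"

definition outer :: "real^'a \<Rightarrow> real^'a^'a" where
  "outer w = (\<chi> i j. w $ i * w $ j)"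

definition loewner_le :: "real^'a^'a \<Rightarrow> real^'a^'a \<Rightarrow> bool" where
  "loewner_le A B \<longleftrightarrow> (\<forall>v. 0 \<le> v \<bullet> ((B - A) *v v))"

end

theory Submission
  imports Defs
begin

lemma inner_outer: "v \<bullet> (outer w *v v) = (v \<bullet> w)^2" for v w :: "real^'a"
  by (simp add: outer_def matrix_vector_mult_def inner_vec_def power2_eq_square
      sum_distrib_left sum_distrib_right mult_ac sum_product)

lemma cont_stackw:
  fixes x :: "'t::topological_space \<Rightarrow> real^'n" and u :: "'t \<Rightarrow> real^'d"
  assumes "continuous_on S x" "continuous_on S u"
  shows "continuous_on S (\<lambda>t. stackw (x t) (u t))"
  unfolding stackw_def
proof (intro continuous_on_vec_lambda)
  fix k :: "'n + 'd"
  show "continuous_on S (\<lambda>t. case k of Inl i \<Rightarrow> x t $ i | Inr j \<Rightarrow> u t $ j)"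
    by (cases k) (auto intro!: continuous_intros assms)
qed

lemma cont_outer:
  assumes "continuous_on S w"
  shows "continuous_on S (\<lambda>t. outer (w t))"
  unfolding outer_def by (intro continuous_intros assms)

lemma bl_quad: "bounded_linear (\<lambda>A::real^'a^'a. v \<bullet> (A *v v))"
proof -
  have "linear (\<lambda>A::real^'a^'a. v \<bullet> (A *v v))"
    by (rule linearI) (simp_all add: matrix_vector_mult_add_rdistrib inner_add_right
        matrix_vector_mult_def inner_vec_def sum_distrib_left mult_ac distrib_left sum.distrib)
  then show ?thesis by (simp add: linear_conv_bounded_linear)
qed

lemma bl_g: "bounded_linear (\<lambda>A::real^('n \<times> 'k::finite)^'n. \<Sum>k\<in>UNIV. v $ k * (A $ i $ (j,k)))"
proof -
  have "linear (\<lambda>A::real^('n \<times> 'k::finite)^'n. \<Sum>k\<in>UNIV. v $ k * (A $ i $ (j,k)))"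
    by (rule linearI) (simp_all add: sum.distrib algebra_simps sum_distrib_left)
  then show ?thesis by (simp add: linear_conv_bounded_linear)
qed

theorem lemma1:
  fixes x :: "real \<Rightarrow> real^'n" and u :: "real \<Rightarrow> real^'d"
    and m :: "real \<Rightarrow> real^('n \<times> ('n + 'd))^'n"
    and km t0 tc :: real and tw :: "'p::finite \<Rightarrow> real"
  assumes cx: "continuous_on {t0..tc} x"
    and cu: "continuous_on {t0..tc} u"
    and km: "km > 0"
    and ode: "\<And>t. t \<in> {t0..tc} \<Longrightarrow>
        (m has_vector_derivative (Yreg (x t) (u t) - km *\<^sub>R m t)) (at t within {t0..tc})"
    and m0: "m t0 = 0"
    and tw_inj: "inj tw"
    and tw_range: "\<And>j. t0 \<le> tw j \<and> tw j \<le> tc"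
    and tw_last: "\<exists>j. tw j = tc"
    and p_ge: "CARD('p) \<ge> CARD('n) + CARD('d)"
    and rk: "rank ((\<chi> c. m (tw (fst c)) $ snd c) :: real^('n \<times> ('n + 'd))^('p \<times> 'n))
             = CARD('n \<times> ('n + 'd))"
  shows "\<exists>\<alpha>>0. loewner_le (\<alpha> *\<^sub>R mat 1)
           (integral {t0..tc} (\<lambda>\<tau>. outer (stackw (x \<tau>) (u \<tau>))))"
proof -
  define W where "W = (\<lambda>\<tau>. stackw (x \<tau>) (u \<tau>))"
  define G where "G = integral {t0..tc} (\<lambda>\<tau>. outer (W \<tau>))"
  have contW: "continuous_on {t0..tc} W" unfolding W_def by (rule cont_stackw[OF cx cu])
  have contO: "continuous_on {t0..tc} (\<lambda>\<tau>. outer (W \<tau>))" by (rule cont_outer[OF contW])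
  have intO: "(\<lambda>\<tau>. outer (W \<tau>)) integrable_on {t0..tc}"
    using contO integrable_continuous_interval by blast
  have quad: "v \<bullet> (G *v v) = integral {t0..tc} (\<lambda>\<tau>. (v \<bullet> W \<tau>)^2)" for v
  proof -
    have "integral {t0..tc} ((\<lambda>A. v \<bullet> (A *v v)) \<circ> (\<lambda>\<tau>. outer (W \<tau>))) = v \<bullet> (G *v v)"
      using integral_linear[OF intO bl_quad] G_def by simp
    then show ?thesis by (simp add: o_def inner_outer)
  qed
  define M where "M = ((\<chi> c. m (tw (fst c)) $ snd c) :: real^('n \<times> ('n + 'd))^('p \<times> 'n))"
  have tlt: "t0 < tc"
  proof (rule ccontr)
    assume "\<not> t0 < tc"
    then have eq: "tw j = t0" for j using tw_range[of j] by force
    then have "M = 0" using m0 by (simp add: vec_eq_iff M_def)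
    then show False using rk M_def by simp
  qed
  have pos: "integral {t0..tc} (\<lambda>\<tau>. (v \<bullet> W \<tau>)^2) > 0" if "v \<noteq> 0" for v
  proof (rule ccontr)
    assume neg: "\<not> integral {t0..tc} (\<lambda>\<tau>. (v \<bullet> W \<tau>)^2) > 0"
    have cf: "continuous_on {t0..tc} (\<lambda>\<tau>. (v \<bullet> W \<tau>)^2)" by (intro continuous_intros contW)
    have "integral {t0..tc} (\<lambda>\<tau>. (v \<bullet> W \<tau>)^2) \<ge> 0"
      by (rule integral_nonneg) (auto intro: integrable_continuous_interval cf)
    then have "integral (cbox t0 tc) (\<lambda>\<tau>. (v \<bullet> W \<tau>)^2) = 0" using neg by simp
    then have z: "\<forall>\<tau>\<in>cbox t0 tc. (v \<bullet> W \<tau>)^2 = 0"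
      using integral_cbox_eq_0_iff[of t0 tc "\<lambda>\<tau>. (v \<bullet> W \<tau>)^2"] cf tlt by simp
    then have z': "v \<bullet> W \<tau> = 0" if "\<tau> \<in> {t0..tc}" for \<tau> using that by simp
    define g where "g i j t = (\<Sum>k\<in>UNIV. v $ k * (m t $ i $ (j,k)))" for i j t
    have gder: "((g i j) has_real_derivative (- km * g i j t)) (at t within {t0..tc})"
      if t: "t \<in> {t0..tc}" for i j t
    proof -
      have "((g i j) has_vector_derivative
          (\<Sum>k\<in>UNIV. v $ k * ((Yreg (x t) (u t) - km *\<^sub>R m t) $ i $ (j,k)))) (at t within {t0..tc})"
        unfolding g_def
        using bounded_linear.has_vector_derivative[OF bl_g ode[OF t], of v i j] by simp
      moreover have "(\<Sum>k\<in>UNIV. v $ k * ((Yreg (x t) (u t) - km *\<^sub>R m t) $ i $ (j,k)))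
          = (if i = j then v \<bullet> W t else 0) - km * g i j t"
        by (simp add: Yreg_def g_def W_def inner_vec_def algebra_simps sum_subtractf
            sum_distrib_left mult_ac)
      ultimately show ?thesis using z'[OF t]
        by (cases "i = j") (simp_all add: has_real_derivative_iff_has_vector_derivative)
    qed
    have g0: "g i j t = 0" if t: "t \<in> {t0..tc}" for i j t
    proof (cases "t = t0")
      case True then show ?thesis by (simp add: g_def m0)
    next
      case False
      then have lt: "t0 < t" using t by simp
      define h where "h s = exp (km * s) * g i j s" for s
      have hder: "(h has_real_derivative 0) (at s within {t0..tc})" if "s \<in> {t0..tc}" for s
      proof -
        have e: "((\<lambda>s. exp (km * s)) has_real_derivative exp (km * s) * km) (at s within {t0..tc})"
          by (auto intro!: derivative_eq_intros)
        have "(h has_real_derivative exp (km * s) * (- km * g i j s) + exp (km * s) * km * g i j s)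
            (at s within {t0..tc})"
          unfolding h_def by (rule DERIV_mult'[OF e gder[OF that]])
        then show ?thesis by (simp add: algebra_simps)
      qed
      have "continuous_on {t0..tc} h" by (rule DERIV_continuous_on[OF hder])
      then have ch: "continuous_on {t0..t} h" by (rule continuous_on_subset) (use t in auto)
      have "h t = h t0"
      proof (rule DERIV_isconst_end[OF lt ch])
        fix s assume "t0 < s" "s < t"
        then show "(h has_real_derivative 0) (at s)"
          using hder[of s] t at_within_Icc_at[of t0 s tc] by simp
      qed
      then show ?thesis by (simp add: h_def g_def m0)
    qed
    obtain i0 :: 'n where True by simp
    define c where "c = ((\<chi> q. if fst q = i0 then v $ snd q else 0) :: real^('n \<times> ('n+'d)))"
    have "c \<noteq> 0"
    proof
      assume "c = 0"
      then have "v $ k = 0" for k by (simp add: c_def vec_eq_iff) (metis fst_conv snd_conv)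
      then show False using that by (simp add: vec_eq_iff)
    qed
    moreover have "M *v c = 0"
    proof -
      have "(M *v c) $ r = 0" for r
      proof -
        obtain pj i where r: "r = (pj, i)" by (cases r)
        have "(M *v c) $ r = (\<Sum>q\<in>UNIV. m (tw pj) $ i $ q * (if fst q = i0 then v $ snd q else 0))"
          by (simp add: M_def c_def matrix_vector_mult_def r)
        also have "\<dots> = (\<Sum>q\<in>UNIV \<times> UNIV. m (tw pj) $ i $ q * (if fst q = i0 then v $ snd q else 0))"
          by simp
        also have "\<dots> = (\<Sum>a\<in>UNIV. \<Sum>b\<in>UNIV. m (tw pj) $ i $ (a,b) * (if a = i0 then v $ b else 0))"
          by (simp add: sum.cartesian_product split_def)
        also have "\<dots> = (\<Sum>b\<in>UNIV. m (tw pj) $ i $ (i0,b) * v $ b)"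
        proof -
          have "(\<Sum>b\<in>UNIV. m (tw pj) $ i $ (a,b) * (if a = i0 then v $ b else 0))
              = (if a = i0 then (\<Sum>b\<in>UNIV. m (tw pj) $ i $ (i0,b) * v $ b) else 0)" for a
            by (cases "a = i0") simp_all
          then show ?thesis by simp
        qed
        also have "\<dots> = g i i0 (tw pj)" by (simp add: g_def mult_ac)
        also have "\<dots> = 0" using g0 tw_range by simp
        finally show ?thesis .
      qed
      then show ?thesis by (simp add: vec_eq_iff)
    qed
    ultimately have "rank M \<noteq> CARD('n \<times> ('n + 'd))"
      using matrix_nonfull_linear_equations_eq by blast
    then show False using rk M_def by simp
  qed
  obtain k0 :: "'n + 'd" where True by simp
  have sne: "sphere (0::real^('n+'d)) 1 \<noteq> {}"
  proof -
    have "axis k0 (1::real) \<in> sphere 0 1" by simp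
    then show ?thesis by blast
  qed
  define q where "q v = v \<bullet> (G *v v)" for v
  have cq: "continuous_on (sphere 0 1) q" unfolding q_def by (intro continuous_intros)
  obtain v0 where v0: "v0 \<in> sphere 0 1" and mn: "\<And>y. y \<in> sphere 0 1 \<Longrightarrow> q v0 \<le> q y"
    using continuous_attains_inf[OF compact_sphere sne cq] by blast
  have "v0 \<noteq> 0" using v0 by auto
  then have apos: "q v0 > 0" using pos[of v0] quad by (simp add: q_def)
  show ?thesis
  proof (intro exI[of _ "q v0"] conjI apos)
    show "loewner_le (q v0 *\<^sub>R mat 1) (integral {t0..tc} (\<lambda>\<tau>. outer (stackw (x \<tau>) (u \<tau>))))"
    proof -
      have Gd: "integral {t0..tc} (\<lambda>\<tau>. outer (stackw (x \<tau>) (u \<tau>))) = G"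
        by (simp add: G_def W_def)
      show ?thesis
      unfolding loewner_le_def Gd
    proof
      fix v :: "real^('n+'d)"
      have sm: "(q v0 *\<^sub>R mat 1) *v v = q v0 *\<^sub>R v"
        by (metis scaleR_matrix_vector_assoc matrix_vector_mul_lid)
      have eq: "v \<bullet> ((G - q v0 *\<^sub>R mat 1) *v v) = q v - q v0 * (norm v)^2"
        unfolding matrix_vector_mult_diff_rdistrib sm inner_diff_right
        by (simp add: q_def power2_norm_eq_inner)
      show "0 \<le> v \<bullet> ((G - q v0 *\<^sub>R mat 1) *v v)"
      proof (cases "v = 0")
        case True then show ?thesis by simp
      next
        case False
        define y where "y = (1/norm v) *\<^sub>R v"
        have y: "y \<in> sphere 0 1" using False by (simp add: y_def)
        obtain nv where nv: "nv = norm v" by simp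
        have vy: "v = nv *\<^sub>R y" using False by (simp add: y_def nv)
        have qs: "q (nv *\<^sub>R y) = nv * (nv * q y)" by (simp add: q_def matrix_vector_mult_scaleR)
        have "q v = nv * (nv * q y)" by (subst vy) (rule qs)
        then have "q v = (norm v)^2 * q y" unfolding nv[symmetric] by (simp add: power2_eq_square)
        moreover have "(norm v)^2 * q v0 \<le> (norm v)^2 * q y"
          by (rule mult_left_mono[OF mn[OF y]]) simp
        ultimately show ?thesis unfolding eq by (simp add: mult.commute)
      qed
    qed
    qed
  qed
qed
end
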